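(* Let $n\ge 1$ and $t\ge 0$ be integers. The number of permutations $\pi\in S_n$ that are $t$-stack-sortable under $s_{1\dot{2}}$ equals $n!$ if $n\le t$, and equals $t!\cdot (t+1)^{\,n-t}$ if $n>t$.
   Context: The $1\dot{2}$-avoiding stack-sorting map $s_{1\dot{2}}$ is defined as follows. Start with the input $\pi$ and an empty stack. Repeat the following step until both the input and the stack are empty: - If input remains, and either the stack is empty or the next input entry is smaller than the entry at the bottom of the stack, push the next input entry onto the top of the stack. - Otherwise, pop the top entry of the stack and append it to the output. The output word is $s_{1\dot{2}}(\pi)$. For an integer $t\ge 0$, a permutation $\pi\in S_n$ is called $t$-stack-sortable (under $s_{1\dot{2}}$) if $s_{1\dot{2}}^{\,t}(\pi)$, the $t$-fold iterate applied to $\pi$, equals the identity $12\cdots n$. *)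

theory Defs
  imports Main "HOL-Combinatorics.Multiset_Permutations"
begin

text \<open>The stack is represented as a list
whose head is the top of the stack and whose last element is the bottom.\<close>

function stack_run :: "nat list \<Rightarrow> nat list \<Rightarrow> nat list" where
  "stack_run inp stk =
     (if inp \<noteq> [] \<and> (stk = [] \<or> hd inp < last stk)
      then stack_run (tl inp) (hd inp # stk)
      else (case stk of
              [] \<Rightarrow> []
            | x # rest \<Rightarrow> x # stack_run inp rest))"
  by pat_completeness auto
termination
  by (relation "measure (\<lambda>(inp, stk). 2 * length inp + length stk)") (auto simp: neq_Nil_conv)

definition s12 :: "nat list \<Rightarrow> nat list" where
  "s12 \<pi> = stack_run \<pi> []"

definition t_stack_sortable :: "nat \<Rightarrow> nat list \<Rightarrow> bool" where
  "t_stack_sortable t \<pi> \<longleftrightarrow> (s12 ^^ t) \<pi> = [1..<length \<pi> + 1]"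

end

theory Submission
  imports Defs
begin


declare stack_run.simps[simp del]

lemma stack_run_gen:
  "stk \<noteq> [] \<Longrightarrow> stack_run inp stk =
     rev (takeWhile (\<lambda>y. y < last stk) inp) @ stk @ stack_run (dropWhile (\<lambda>y. y < last stk) inp) []"
proof (induction inp stk rule: stack_run.induct)
  case (1 inp stk)
  show ?case
  proof (cases "inp \<noteq> [] \<and> hd inp < last stk")
    case True
    then obtain z zs where inp: "inp = z # zs" by (cases inp) auto
    have "stack_run inp stk = stack_run (tl inp) (hd inp # stk)"
      using True "1.prems" by (subst stack_run.simps) auto
    also have "\<dots> = rev (takeWhile (\<lambda>y. y < last stk) zs) @ (z # stk) @ stack_run (dropWhile (\<lambda>y. y < last stk) zs) []"
      using "1.IH"(1) True "1.prems" inp by auto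
    finally show ?thesis using True inp by simp
  next
    case False
    then obtain x rest where stk: "stk = x # rest" using "1.prems" by (cases stk) auto
    have tw: "takeWhile (\<lambda>y. y < last stk) inp = []" "dropWhile (\<lambda>y. y < last stk) inp = inp"
      using False by (cases inp; auto)+
    have eq: "stack_run inp stk = x # stack_run inp rest"
      using False "1.prems" stk by (subst stack_run.simps) auto
    show ?thesis
    proof (cases "rest = []")
      case True thus ?thesis using eq tw stk by simp
    next
      case False
      have "stack_run inp rest = rest @ stack_run inp []"
        using "1.IH"(2)[of x rest] `\<not> (inp \<noteq> [] \<and> hd inp < last stk)` "1.prems" stk False tw by auto
      thus ?thesis using eq tw stk by simp
    qed
  qed
qed

function sf :: "nat list \<Rightarrow> nat list" where
  "sf [] = []"
| "sf (x # rest) = rev (takeWhile (\<lambda>y. y < x) rest) @ x # sf (dropWhile (\<lambda>y. y < x) rest)"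
  by pat_completeness auto
termination
  by (relation "measure length") (auto simp: le_imp_less_Suc length_dropWhile_le)

lemma s12_sf: "s12 xs = sf xs"
proof (induction xs rule: sf.induct)
  case 1 thus ?case by (simp add: s12_def stack_run.simps)
next
  case (2 x rest)
  have "s12 (x # rest) = stack_run rest [x]" unfolding s12_def by (subst stack_run.simps) simp
  also have "\<dots> = rev (takeWhile (\<lambda>y. y < x) rest) @ [x] @ s12 (dropWhile (\<lambda>y. y < x) rest)"
    by (subst stack_run_gen) (auto simp: s12_def)
  finally show ?case using 2 by simp
qed

lemma mset_sf: "mset (sf xs) = mset xs"
proof (induction xs rule: sf.induct)
  case (2 x rest)
  have "mset rest = mset (takeWhile (\<lambda>y. y < x) rest) + mset (dropWhile (\<lambda>y. y < x) rest)"
    by (metis mset_append takeWhile_dropWhile_id)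
  thus ?case using 2 by simp
qed simp

lemma set_sf[simp]: "set (sf xs) = set xs" by (metis mset_sf set_mset_mset)
lemma length_sf[simp]: "length (sf xs) = length xs" by (metis mset_sf size_mset)
lemma distinct_sf[simp]: "distinct (sf xs) = distinct xs" by (metis mset_sf mset_eq_imp_distinct_iff)

lemma sf_append: "zs \<noteq> [] \<Longrightarrow> \<forall>y\<in>set ys. y \<le> hd zs \<Longrightarrow> sf (ys @ zs) = sf ys @ sf zs"
proof (induction ys rule: sf.induct)
  case 1 thus ?case by simp
next
  case (2 x rest)
  obtain z zs' where zs: "zs = z # zs'" using "2.prems" by (cases zs) auto
  have xz: "\<not> z < x" using "2.prems" zs by auto
  have t: "takeWhile (\<lambda>y. y < x) (rest @ zs) = takeWhile (\<lambda>y. y < x) rest"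
    by (simp add: takeWhile_append zs xz) (metis takeWhile_eq_all_conv)
  have d: "dropWhile (\<lambda>y. y < x) (rest @ zs) = dropWhile (\<lambda>y. y < x) rest @ zs"
    by (simp add: dropWhile_append zs xz)
  have "\<forall>y\<in>set (dropWhile (\<lambda>y. y < x) rest). y \<le> hd zs"
    using "2.prems"(2) by (auto dest!: set_dropWhileD)
  hence ih: "sf (dropWhile (\<lambda>y. y < x) rest @ zs) = sf (dropWhile (\<lambda>y. y < x) rest) @ sf zs"
    using "2.IH" "2.prems"(1) by blast
  have "sf ((x # rest) @ zs) = rev (takeWhile (\<lambda>y. y < x) rest) @ x # sf (dropWhile (\<lambda>y. y < x) rest @ zs)"
    by (simp only: append_Cons sf.simps t d)
  thus ?case by (simp only: ih sf.simps) simp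
qed

lemma sf_Cons_min: "\<forall>y\<in>set ys. a < y \<Longrightarrow> sf (a # ys) = a # sf ys"
  by (cases ys) auto

lemma last_sf_ge: "xs \<noteq> [] \<Longrightarrow> \<forall>y\<in>set xs. y \<le> last (sf xs)"
proof (induction xs rule: sf.induct)
  case 1 thus ?case by simp
next
  case (2 x rest)
  show ?case
  proof (cases "dropWhile (\<lambda>y. y < x) rest = []")
    case True
    hence a: "\<forall>y\<in>set rest. y < x" by (simp add: dropWhile_eq_Nil_conv)
    show ?thesis unfolding sf.simps True using a by auto
  next
    case False
    let ?d = "dropWhile (\<lambda>y. y < x) rest"
    have ih: "\<forall>y\<in>set ?d. y \<le> last (sf ?d)" using 2 False by simp
    have nl: "sf ?d \<noteq> []" using False by (metis length_0_conv length_sf)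
    have hd: "\<not> hd ?d < x" using False hd_dropWhile by blast
    have hx: "hd ?d \<in> set ?d" using False by simp
    have "\<forall>y\<in>set rest. y \<le> last (sf ?d)"
    proof
      fix y assume y: "y \<in> set rest"
      show "y \<le> last (sf ?d)"
      proof (cases "y < x")
        case True thus ?thesis using hd ih hx by fastforce
      next
        case False
        hence "y \<in> set ?d" using y by (metis dropWhile_append3 in_set_conv_decomp in_set_dropD set_append Un_iff takeWhile_dropWhile_id set_takeWhileD)
        thus ?thesis using ih by blast
      qed
    qed
    moreover have "x \<le> last (sf ?d)" using hd ih hx by fastforce
    ultimately show ?thesis using nl by simp
  qed
qed




definition ins :: "nat \<Rightarrow> nat \<Rightarrow> nat list \<Rightarrow> nat list" where
  "ins p a xs = take p xs @ a # drop p xs"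

lemma ins_0[simp]: "ins 0 a xs = a # xs" by (simp add: ins_def)
lemma length_ins[simp]: "length (ins p a xs) = Suc (length xs)" by (simp add: ins_def)
lemma mset_ins: "mset (ins p a xs) = add_mset a (mset xs)"
proof -
  have "mset (take p xs) + mset (drop p xs) = mset xs" by (metis append_take_drop_id mset_append)
  thus ?thesis by (simp add: ins_def)
qed
lemma set_ins[simp]: "set (ins p a xs) = insert a (set xs)"
  by (metis mset_ins set_mset_mset set_mset_add_mset_insert)
lemma distinct_ins[simp]: "distinct (ins p a xs) \<longleftrightarrow> a \<notin> set xs \<and> distinct xs"
proof -
  have "distinct (ins p a xs) = distinct (a # xs)"
    by (rule mset_eq_imp_distinct_iff) (simp add: mset_ins)
  thus ?thesis by simp
qed
lemma removeAll_ins: "a \<notin> set xs \<Longrightarrow> removeAll a (ins p a xs) = xs"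
proof -
  assume a: "a \<notin> set xs"
  hence "a \<notin> set (take p xs)" "a \<notin> set (drop p xs)" by (auto dest: in_set_takeD in_set_dropD)
  thus ?thesis by (simp add: ins_def)
qed
lemma takeWhile_ins: "a \<notin> set xs \<Longrightarrow> takeWhile (\<lambda>x. x \<noteq> a) (ins p a xs) = take p xs"
  unfolding ins_def by (subst takeWhile_append2) (auto dest: in_set_takeD)
lemma ins_append1: "p \<le> length u \<Longrightarrow> ins p a (u @ v) = ins p a u @ v"
  by (simp add: ins_def)
lemma ins_append2: "ins (length u + k) a (u @ v) = u @ ins k a v"
  by (simp add: ins_def)
lemma rev_ins: "p \<le> length l \<Longrightarrow> rev (ins p a l) = ins (length l - p) a (rev l)"
  by (simp add: ins_def rev_take rev_drop)
lemma ins_hd: "a \<notin> set l \<Longrightarrow> q \<le> length l \<Longrightarrow> hd (ins q a l) = a \<Longrightarrow> ins q a l = a # l"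
  by (cases q; cases l) (auto simp: ins_def)
lemma ins_decomp: "a \<in> set xs \<Longrightarrow> distinct xs \<Longrightarrow>
   xs = ins (length (takeWhile (\<lambda>x. x \<noteq> a) xs)) a (removeAll a xs)"
proof -
  assume a: "a \<in> set xs" and d: "distinct xs"
  obtain u v where xs: "xs = u @ a # v" using a by (metis in_set_conv_decomp)
  have "a \<notin> set u" "a \<notin> set v" using d xs by auto
  thus ?thesis using xs by (simp add: ins_def takeWhile_append)
qed

function fpos :: "nat list \<Rightarrow> nat \<Rightarrow> nat" where
  "fpos [] p = 0"
| "fpos (x # rest) p = (if p = 0 then 0
     else if p \<le> Suc (length (takeWhile (\<lambda>y. y < x) rest)) then Suc (length (takeWhile (\<lambda>y. y < x) rest)) - p
     else Suc (length (takeWhile (\<lambda>y. y < x) rest)) + fpos (dropWhile (\<lambda>y. y < x) rest) (p - Suc (length (takeWhile (\<lambda>y. y < x) rest))))"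
  by pat_completeness auto
termination
  by (relation "measure (\<lambda>(xs, p). length xs)") (auto simp: le_imp_less_Suc length_dropWhile_le)

lemma sf_ins: "p \<le> length xs \<Longrightarrow> \<forall>y\<in>set xs. a < y \<Longrightarrow> sf (ins p a xs) = ins (fpos xs p) a (sf xs)"
proof (induction xs arbitrary: p rule: sf.induct)
  case 1 thus ?case by simp
next
  case (2 x rest)
  define tw where "tw = takeWhile (\<lambda>y. y < x) rest"
  define dw where "dw = dropWhile (\<lambda>y. y < x) rest"
  define L where "L = Suc (length tw)"
  have rest: "rest = tw @ dw" by (simp add: tw_def dw_def)
  have twx: "\<forall>y\<in>set tw. y < x" by (simp add: tw_def) (meson set_takeWhileD)
  have dwx: "dw \<noteq> [] \<Longrightarrow> \<not> hd dw < x" unfolding dw_def by (rule hd_dropWhile)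
  have sfx: "sf (x # rest) = rev tw @ x # sf dw" by (simp add: tw_def dw_def)
  have fp: "fpos (x # rest) p = (if p = 0 then 0 else if p \<le> L then L - p else L + fpos dw (p - L))"
    by (simp add: L_def tw_def dw_def)
  show ?case
  proof (cases "p = 0")
    case True thus ?thesis using "2.prems" by (simp add: sf_Cons_min)
  next
    case p0: False
    show ?thesis
    proof (cases "p \<le> L")
      case True
      have ip: "ins p a (x # rest) = x # (ins (p - 1) a tw @ dw)"
        using True p0 rest by (cases p) (auto simp: ins_def L_def)
      have allx: "\<forall>y\<in>set (ins (p - 1) a tw). y < x" using twx "2.prems" by auto
      have t: "takeWhile (\<lambda>y. y < x) (ins (p - 1) a tw @ dw) = ins (p - 1) a tw"
        using allx dwx by (cases dw) (auto simp: takeWhile_append)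
      have d: "dropWhile (\<lambda>y. y < x) (ins (p - 1) a tw @ dw) = dw"
        using allx dwx by (cases dw) (auto simp: dropWhile_append)
      have "sf (ins p a (x # rest)) = rev (ins (p - 1) a tw) @ x # sf dw"
        using ip t d by simp
      also have "\<dots> = ins (length tw - (p - 1)) a (rev tw) @ x # sf dw"
        using True p0 by (subst rev_ins) (auto simp: L_def)
      also have "\<dots> = ins (L - p) a (rev tw @ x # sf dw)"
        using True p0 by (subst ins_append1) (auto simp: L_def)
      finally have "sf (ins p a (x # rest)) = ins (L - p) a (rev tw @ x # sf dw)" .
      moreover have "fpos (x # rest) p = L - p" using fp True p0 by simp
      ultimately show ?thesis by (simp only: sfx)
    next
      case False
      have lenr: "length (x # rest) = L + length dw" using rest by (simp add: L_def)
      have dne: "dw \<noteq> []" using False "2.prems" lenr by auto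
      have ip: "ins p a (x # rest) = (x # tw) @ ins (p - L) a dw"
        using ins_append2[of "x # tw" "p - L" a dw] False rest by (simp add: L_def)
      have hdi: "hd (ins (p - L) a dw) = hd dw" using False dne by (cases dw) (auto simp: ins_def)
      have ihp: "\<forall>y\<in>set (x # tw). y \<le> hd (ins (p - L) a dw)"
        using twx dwx dne hdi by force
      have "sf (ins p a (x # rest)) = sf (x # tw) @ sf (ins (p - L) a dw)"
        using ip ihp by (simp only: ip) (rule sf_append, simp add: ins_def, rule ihp)
      also have "sf (x # tw) = rev tw @ [x]"
        using twx by (simp add: takeWhile_eq_all_conv[THEN iffD2] dropWhile_eq_Nil_conv[THEN iffD2])
      also have "sf (ins (p - L) a dw) = ins (fpos dw (p - L)) a (sf dw)"
      proof -
        have "p - L \<le> length dw" using False "2.prems" lenr by simp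
        moreover have "\<forall>y\<in>set dw. a < y" using "2.prems" rest by auto
        moreover have ih: "\<And>q. q \<le> length dw \<Longrightarrow> \<forall>y\<in>set dw. a < y \<Longrightarrow> sf (ins q a dw) = ins (fpos dw q) a (sf dw)"
          using "2.IH" unfolding dw_def .
        ultimately show ?thesis by blast
      qed
      also have "(rev tw @ [x]) @ ins (fpos dw (p - L)) a (sf dw) = ins (L + fpos dw (p - L)) a (rev tw @ x # sf dw)"
        using ins_append2[of "rev tw @ [x]" "fpos dw (p - L)" a "sf dw"] by (simp add: L_def)
      finally have "sf (ins p a (x # rest)) = ins (L + fpos dw (p - L)) a (rev tw @ x # sf dw)" .
      moreover have "fpos (x # rest) p = L + fpos dw (p - L)" using fp False p0 by simp
      ultimately show ?thesis by (simp only: sfx)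
    qed
  qed
qed




lemma fpos_Cons: "fpos (x # rest) p = (let L = Suc (length (takeWhile (\<lambda>y. y < x) rest)) in
   if p = 0 then 0 else if p \<le> L then L - p else L + fpos (dropWhile (\<lambda>y. y < x) rest) (p - L))"
  by (simp add: Let_def)

lemma len_split: "length (x # rest) = Suc (length (takeWhile (\<lambda>y. y < x) rest)) + length (dropWhile (\<lambda>y. y < x) rest)"
proof -
  have "length rest = length (takeWhile (\<lambda>y. y < x) rest) + length (dropWhile (\<lambda>y. y < x) rest)"
    by (metis length_append takeWhile_dropWhile_id)
  thus ?thesis by simp
qed

lemma fpos_lt: "1 \<le> p \<Longrightarrow> p \<le> length xs \<Longrightarrow> fpos xs p < length xs"
proof (induction xs arbitrary: p rule: sf.induct)
  case 1 thus ?case by simp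
next
  case (2 x rest)
  define L where "L = Suc (length (takeWhile (\<lambda>y. y < x) rest))"
  define dw where "dw = dropWhile (\<lambda>y. y < x) rest"
  have m: "length (x # rest) = L + length dw" using len_split unfolding L_def dw_def .
  have f: "fpos (x # rest) p = (if p = 0 then 0 else if p \<le> L then L - p else L + fpos dw (p - L))"
    unfolding fpos_Cons L_def dw_def Let_def ..
  show ?case
  proof (cases "p \<le> L")
    case True thus ?thesis using f m "2.prems" by simp
  next
    case False
    have "fpos dw (p - L) < length dw" using "2.IH"[of "p - L"] False "2.prems" m by (simp add: dw_def)
    thus ?thesis using f m False "2.prems" by simp
  qed
qed

lemma fpos_inj: "1 \<le> p \<Longrightarrow> p \<le> length xs \<Longrightarrow> 1 \<le> q \<Longrightarrow> q \<le> length xs \<Longrightarrow> fpos xs p = fpos xs q \<Longrightarrow> p = q"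
proof (induction xs arbitrary: p q rule: sf.induct)
  case 1 thus ?case by simp
next
  case (2 x rest)
  define L where "L = Suc (length (takeWhile (\<lambda>y. y < x) rest))"
  define dw where "dw = dropWhile (\<lambda>y. y < x) rest"
  have m: "length (x # rest) = L + length dw" using len_split unfolding L_def dw_def .
  have f: "\<And>p. fpos (x # rest) p = (if p = 0 then 0 else if p \<le> L then L - p else L + fpos dw (p - L))"
    unfolding fpos_Cons L_def dw_def Let_def ..
  show ?case
  proof (cases "p \<le> L"; cases "q \<le> L")
    assume "p \<le> L" "q \<le> L" thus ?thesis using f[of p] f[of q] "2.prems" by simp
  next
    assume "p \<le> L" "\<not> q \<le> L" thus ?thesis using f[of p] f[of q] "2.prems" by simp
  next
    assume "\<not> p \<le> L" "q \<le> L" thus ?thesis using f[of p] f[of q] "2.prems" by simp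
  next
    assume a: "\<not> p \<le> L" "\<not> q \<le> L"
    hence "fpos dw (p - L) = fpos dw (q - L)" using f[of p] f[of q] "2.prems" by simp
    hence "p - L = q - L" using "2.IH"[of "p - L" "q - L"] a "2.prems" m by (simp add: dw_def)
    thus ?thesis using a by simp
  qed
qed

lemma fpos_bij: "bij_betw (fpos xs) {1..length xs} {0..<length xs}"
proof -
  have inj: "inj_on (fpos xs) {1..length xs}" by (rule inj_onI) (auto intro: fpos_inj)
  have sub: "fpos xs ` {1..length xs} \<subseteq> {0..<length xs}" using fpos_lt by auto
  have "card (fpos xs ` {1..length xs}) = card {0..<length xs}" using card_image[OF inj] by simp
  hence "fpos xs ` {1..length xs} = {0..<length xs}" using sub by (simp add: card_subset_eq)
  thus ?thesis using inj by (simp add: bij_betw_def)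
qed

lemma s12_eq: "s12 = sf" by (rule ext) (rule s12_sf)

lemma mset_sfk: "mset ((sf ^^ k) xs) = mset xs"
  by (induction k) (auto simp: mset_sf)
lemma set_sfk[simp]: "set ((sf ^^ k) xs) = set xs" by (metis mset_sfk set_mset_mset)
lemma length_sfk[simp]: "length ((sf ^^ k) xs) = length xs" by (metis mset_sfk size_mset)
lemma distinct_sfk[simp]: "distinct ((sf ^^ k) xs) = distinct xs" by (metis mset_sfk mset_eq_imp_distinct_iff)

lemma sfk_Cons_min: "\<forall>y\<in>set ys. a < y \<Longrightarrow> (sf ^^ k) (a # ys) = a # (sf ^^ k) ys"
proof (induction k)
  case (Suc k)
  have "\<forall>y\<in>set ((sf ^^ k) ys). a < y" using Suc.prems by simp
  thus ?case using Suc sf_Cons_min[of "(sf ^^ k) ys" a] by simp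
qed simp

lemma sfk_snoc_max: "\<forall>y\<in>set zs. y < M \<Longrightarrow> (sf ^^ k) (zs @ [M]) = (sf ^^ k) zs @ [M]"
proof (induction k)
  case 0 thus ?case by simp
next
  case (Suc k)
  have "\<forall>y\<in>set ((sf ^^ k) zs). y \<le> hd [M]" using Suc.prems by auto
  hence "sf ((sf ^^ k) zs @ [M]) = sf ((sf ^^ k) zs) @ sf [M]" by (intro sf_append) auto
  thus ?case using Suc by simp
qed

lemma sfk_ins: "p \<le> length xs \<Longrightarrow> \<forall>y\<in>set xs. a < y \<Longrightarrow>
   \<exists>q \<le> length xs. (sf ^^ k) (ins p a xs) = ins q a ((sf ^^ k) xs)"
proof (induction k)
  case 0 thus ?case by auto
next
  case (Suc k)
  then obtain q where q: "q \<le> length xs" "(sf ^^ k) (ins p a xs) = ins q a ((sf ^^ k) xs)" by blast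
  have "sf (ins q a ((sf ^^ k) xs)) = ins (fpos ((sf ^^ k) xs) q) a (sf ((sf ^^ k) xs))"
    using q Suc.prems by (intro sf_ins) auto
  moreover have "fpos ((sf ^^ k) xs) q \<le> length xs"
  proof (cases "q = 0")
    case True thus ?thesis by (cases "(sf ^^ k) xs") auto
  next
    case False thus ?thesis using fpos_lt[of q "(sf ^^ k) xs"] q by simp
  qed
  ultimately show ?case using q by auto
qed

lemma sf_last_max: "distinct xs \<Longrightarrow> xs \<noteq> [] \<Longrightarrow> sf xs = butlast (sf xs) @ [last (sf xs)] \<and> (\<forall>y\<in>set (butlast (sf xs)). y < last (sf xs))"
proof -
  assume d: "distinct xs" and ne: "xs \<noteq> []"
  have ne': "sf xs \<noteq> []" using ne by (metis length_0_conv length_sf)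
  have e: "sf xs = butlast (sf xs) @ [last (sf xs)]" using ne' by simp
  have "distinct (sf xs)" using d by simp
  hence "last (sf xs) \<notin> set (butlast (sf xs))" using e by (metis distinct_append not_distinct_conv_prefix distinct.simps(2) distinct_butlast in_set_conv_decomp append.assoc append_Cons self_append_conv2) 
  moreover have "\<forall>y\<in>set (butlast (sf xs)). y \<le> last (sf xs)"
    using last_sf_ge[OF ne] by (metis in_set_butlastD set_sf)
  ultimately have "\<forall>y\<in>set (butlast (sf xs)). y < last (sf xs)"
    by (metis le_neq_implies_less)
  thus ?thesis using e by blast
qed




lemma E_lemma: "distinct xs \<Longrightarrow> \<forall>y\<in>set xs. a < y \<Longrightarrow> r < length xs \<Longrightarrow>
   hd ((sf ^^ r) (sf xs @ [a])) \<noteq> a"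
proof (induction r arbitrary: xs)
  case 0
  have ne: "sf xs \<noteq> []" using "0.prems" by (metis length_0_conv length_sf less_zeroE)
  hence "hd (sf xs) \<in> set xs" by (metis hd_in_set set_sf)
  thus ?case using ne "0.prems" by auto
next
  case (Suc r xs)
  have ne: "xs \<noteq> []" using Suc.prems by auto
  define ys where "ys = butlast (sf xs)"
  define M where "M = last (sf xs)"
  have e: "sf xs = ys @ [M]" and lt: "\<forall>y\<in>set ys. y < M"
    using sf_last_max[OF Suc.prems(1) ne] unfolding ys_def M_def by auto
  have dys: "distinct ys" using e Suc.prems(1) by (metis distinct_append distinct_sf)
  have sys: "set ys \<subseteq> set xs" using e by (metis set_sf Un_upper1 set_append)
  have aM: "a < M" using e Suc.prems(2) by (metis in_set_conv_decomp set_sf)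
  have ays: "\<forall>y\<in>set ys. a < y" using sys Suc.prems(2) by auto
  have lys: "length ys = length xs - 1" using e by (metis length_sf length_butlast ys_def)
  have "sf (ys @ [M, a]) = sf ys @ sf [M, a]"
    using lt by (intro sf_append) auto
  also have "sf [M, a] = [a, M]" using aM by simp
  finally have s1: "sf (sf xs @ [a]) = (sf ys @ [a]) @ [M]" using e by simp
  have "(sf ^^ Suc r) (sf xs @ [a]) = (sf ^^ r) (sf (sf xs @ [a]))"
    by (simp only: funpow_Suc_right comp_def)
  also have "\<dots> = (sf ^^ r) (sf ys @ [a]) @ [M]"
    using s1 lt aM by (subst s1, intro sfk_snoc_max) auto
  finally have eq: "(sf ^^ Suc r) (sf xs @ [a]) = (sf ^^ r) (sf ys @ [a]) @ [M]" .
  have ne2: "(sf ^^ r) (sf ys @ [a]) \<noteq> []" by (metis length_0_conv length_sfk length_append_singleton nat.distinct(1))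
  have "hd ((sf ^^ r) (sf ys @ [a])) \<noteq> a"
    using Suc.IH[OF dys ays] Suc.prems(3) lys by simp
  thus ?case using eq ne2 by simp
qed

lemma fpos_0: "fpos xs 0 = 0" by (cases xs) auto

definition Aset :: "nat \<Rightarrow> nat \<Rightarrow> nat list \<Rightarrow> nat set" where
  "Aset r a xs = {p. p \<le> length xs \<and> hd ((sf ^^ r) (ins p a xs)) = a}"

lemma hd_ins_pos: "0 < p \<Longrightarrow> xs \<noteq> [] \<Longrightarrow> hd (ins p a xs) = hd xs"
  by (cases p; cases xs) (auto simp: ins_def)

lemma ins_end: "ins (length xs) a xs = xs @ [a]" by (simp add: ins_def)

lemma key: "distinct xs \<Longrightarrow> \<forall>y\<in>set xs. a < y \<Longrightarrow> card (Aset r a xs) = min (Suc r) (Suc (length xs))"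
proof (induction r arbitrary: xs)
  case 0
  have "Aset 0 a xs = {0}"
  proof (rule set_eqI)
    fix p show "p \<in> Aset 0 a xs \<longleftrightarrow> p \<in> {0}"
    proof (cases "p = 0")
      case False
      { assume p: "p \<le> length xs"
        hence "xs \<noteq> []" using False by auto
        hence "hd (ins p a xs) = hd xs" "hd xs \<in> set xs" using hd_ins_pos False by auto
        hence "hd (ins p a xs) \<noteq> a" using "0.prems" by auto }
      thus ?thesis using False by (auto simp: Aset_def)
    qed (simp add: Aset_def)
  qed
  thus ?case by simp
next
  case (Suc r xs)
  define m where "m = length xs"
  define ys where "ys = sf xs"
  define B where "B = Aset r a ys"
  have dys: "distinct ys" and ays: "\<forall>y\<in>set ys. a < y" and lys: "length ys = m"
    using Suc.prems by (auto simp: ys_def m_def)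
  have cB: "card B = min (Suc r) (Suc m)" using Suc.IH[OF dys ays] lys by (simp add: B_def)
  have Bsub: "B \<subseteq> {0..m}" using lys by (auto simp: B_def Aset_def)
  have B0: "0 \<in> B" using sfk_Cons_min[OF ays] by (simp add: B_def Aset_def)
  have fle: "\<And>p. p \<le> m \<Longrightarrow> fpos xs p \<le> m"
  proof -
    fix p assume "p \<le> m"
    thus "fpos xs p \<le> m" using fpos_lt[of p xs] by (cases "p = 0"; cases xs) (auto simp: m_def)
  qed
  have A: "Aset (Suc r) a xs = insert 0 {p \<in> {1..m}. fpos xs p \<in> B}"
  proof (rule set_eqI)
    fix p
    have st: "p \<le> m \<Longrightarrow> sf (ins p a xs) = ins (fpos xs p) a ys"
      using sf_ins[of p xs a] Suc.prems(2) unfolding ys_def m_def by blast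
    have e1: "(sf ^^ Suc r) (ins p a xs) = (sf ^^ r) (sf (ins p a xs))"
      by (simp only: funpow_Suc_right comp_def)
    have e2: "p \<le> m \<Longrightarrow> (sf ^^ Suc r) (ins p a xs) = (sf ^^ r) (ins (fpos xs p) a ys)"
      by (simp only: e1 st)
    have "p \<in> Aset (Suc r) a xs \<longleftrightarrow> p \<le> m \<and> hd ((sf ^^ Suc r) (ins p a xs)) = a"
      unfolding Aset_def mem_Collect_eq m_def ..
    also have "\<dots> \<longleftrightarrow> p \<le> m \<and> hd ((sf ^^ r) (ins (fpos xs p) a ys)) = a"
      using e2 by metis
    also have "\<dots> \<longleftrightarrow> p \<le> m \<and> fpos xs p \<in> B"
      unfolding B_def Aset_def mem_Collect_eq lys using fle by blast
    finally have "p \<in> Aset (Suc r) a xs \<longleftrightarrow> p \<le> m \<and> fpos xs p \<in> B" .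
    thus "p \<in> Aset (Suc r) a xs \<longleftrightarrow> p \<in> insert 0 {p \<in> {1..m}. fpos xs p \<in> B}"
      using B0 fpos_0[of xs] by (cases "p = 0") auto
  qed
  have bij: "bij_betw (fpos xs) {1..m} {0..<m}" using fpos_bij m_def by simp
  have bij2: "bij_betw (fpos xs) {p \<in> {1..m}. fpos xs p \<in> B} (B \<inter> {0..<m})"
  proof -
    have "inj_on (fpos xs) {p \<in> {1..m}. fpos xs p \<in> B}"
      using bij by (auto simp: bij_betw_def intro: inj_on_subset)
    moreover have "fpos xs ` {p \<in> {1..m}. fpos xs p \<in> B} = B \<inter> {0..<m}"
    proof
      show "fpos xs ` {p \<in> {1..m}. fpos xs p \<in> B} \<subseteq> B \<inter> {0..<m}"
        using bij by (auto simp: bij_betw_def)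
      show "B \<inter> {0..<m} \<subseteq> fpos xs ` {p \<in> {1..m}. fpos xs p \<in> B}"
      proof
        fix q assume q: "q \<in> B \<inter> {0..<m}"
        then obtain p where "p \<in> {1..m}" "fpos xs p = q" using bij
          by (metis IntD2 bij_betw_def imageE)
        thus "q \<in> fpos xs ` {p \<in> {1..m}. fpos xs p \<in> B}" using q by auto
      qed
    qed
    ultimately show ?thesis by (simp add: bij_betw_def)
  qed
  have cA: "card (Aset (Suc r) a xs) = Suc (card (B \<inter> {0..<m}))"
    using A bij_betw_same_card[OF bij2] by simp
  show ?case
  proof (cases "m \<le> r")
    case True
    have "card B = card {0..m}" using cB True by simp
    hence "B = {0..m}" using Bsub by (simp add: card_subset_eq)
    hence "B \<inter> {0..<m} = {0..<m}" by auto
    thus ?thesis using cA True by (simp add: m_def)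
  next
    case False
    have "m \<notin> B"
      using E_lemma[OF Suc.prems(1) Suc.prems(2), of r] False ins_end[of ys a] lys
      by (simp add: B_def Aset_def ys_def m_def)
    hence "B \<inter> {0..<m} = B" using Bsub by (force simp: le_less)
    thus ?thesis using cA cB False by (simp add: m_def)
  qed
qed




lemma arith_step: "(if k \<le> t then fact k else fact t * (t+1)^(k-t)) * min (Suc t) (Suc k)
   = (if Suc k \<le> t then fact (Suc k) else (fact t * (t+1)^(Suc k-t) :: nat))"
proof (cases "Suc k \<le> t")
  case True thus ?thesis by (simp add: min_def)
next
  case False
  show ?thesis
  proof (cases "k = t")
    case True thus ?thesis by (simp add: min_def)
  next
    case False
    hence "k > t" using \<open>\<not> Suc k \<le> t\<close> by simp
    hence "Suc k - t = Suc (k - t)" by simp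
    thus ?thesis using \<open>k > t\<close> by (simp add: min_def algebra_simps)
  qed
qed

lemma sfk_Nil: "(sf ^^ t) [] = []" by (induction t) auto

lemma count: "finite S \<Longrightarrow> card {\<pi> \<in> permutations_of_set S. (sf ^^ t) \<pi> = sorted_list_of_set S}
   = (if card S \<le> t then fact (card S) else fact t * (t+1)^(card S - t))"
proof (induction "card S" arbitrary: S)
  case 0
  hence S: "S = {}" by simp
  have "{\<pi> \<in> permutations_of_set S. (sf ^^ t) \<pi> = sorted_list_of_set S} = {[]}"
    using S by (auto simp: sfk_Nil)
  thus ?case using S by simp
next
  case (Suc k S)
  have ne: "S \<noteq> {}" using Suc.hyps(2) by auto
  define a where "a = Min S"
  define S' where "S' = S - {a}"
  have aS: "a \<in> S" using ne Suc.prems by (simp add: a_def)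
  have fS': "finite S'" using Suc.prems by (simp add: S'_def)
  have cS': "card S' = k" using Suc.hyps(2) aS Suc.prems by (simp add: S'_def)
  have alt: "\<forall>y\<in>S'. a < y" using Suc.prems by (auto simp: S'_def a_def intro: Min_le order.not_eq_order_implies_strict)
  have SS': "S = insert a S'" using aS by (auto simp: S'_def)
  have aS': "a \<notin> S'" by (simp add: S'_def)
  have sl: "sorted_list_of_set S = a # sorted_list_of_set S'"
    using sorted_list_of_set_nonempty[OF Suc.prems ne] by (simp add: a_def S'_def)
  define Sort' where "Sort' = {\<sigma> \<in> permutations_of_set S'. (sf ^^ t) \<sigma> = sorted_list_of_set S'}"
  have IH: "card Sort' = (if k \<le> t then fact k else fact t * (t+1)^(k-t))"
    using Suc.hyps(1)[of S'] cS' fS' by (simp add: Sort'_def)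
  have memS': "\<And>\<sigma>. \<sigma> \<in> permutations_of_set S' \<Longrightarrow> distinct \<sigma> \<and> set \<sigma> = S' \<and> length \<sigma> = k \<and> (\<forall>y\<in>set \<sigma>. a < y)"
    using alt cS' by (auto dest: permutations_of_setD length_finite_permutations_of_set)
  define F where "F = (\<lambda>(\<sigma>, p). ins p a \<sigma>)"
  define Sig where "Sig = (SIGMA \<sigma>:Sort'. Aset t a \<sigma>)"
  have img: "{\<pi> \<in> permutations_of_set S. (sf ^^ t) \<pi> = sorted_list_of_set S} = F ` Sig"
  proof
    show "{\<pi> \<in> permutations_of_set S. (sf ^^ t) \<pi> = sorted_list_of_set S} \<subseteq> F ` Sig"
    proof
      fix \<pi> assume "\<pi> \<in> {\<pi> \<in> permutations_of_set S. (sf ^^ t) \<pi> = sorted_list_of_set S}"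
      hence pS: "\<pi> \<in> permutations_of_set S" and st: "(sf ^^ t) \<pi> = sorted_list_of_set S" by auto
      have d: "distinct \<pi>" and s: "set \<pi> = S" using pS by (auto dest: permutations_of_setD)
      define \<sigma> where "\<sigma> = removeAll a \<pi>"
      define p where "p = length (takeWhile (\<lambda>x. x \<noteq> a) \<pi>)"
      have pi: "\<pi> = ins p a \<sigma>" using ins_decomp[of a \<pi>] aS s d by (simp add: \<sigma>_def p_def)
      have sp: "\<sigma> \<in> permutations_of_set S'" using d s by (intro permutations_of_setI) (auto simp: \<sigma>_def S'_def distinct_removeAll)
      note m = memS'[OF sp]
      have plen: "p \<le> length \<sigma>"
      proof -
        have "dropWhile (\<lambda>x. x \<noteq> a) \<pi> \<noteq> []" using aS s by (auto simp: dropWhile_eq_Nil_conv)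
        moreover have "length \<pi> = p + length (dropWhile (\<lambda>x. x \<noteq> a) \<pi>)"
          unfolding p_def by (metis length_append takeWhile_dropWhile_id)
        ultimately have "p < length \<pi>" by simp
        thus ?thesis using pi by simp
      qed
      obtain q where q: "q \<le> length ((sf ^^ t) \<sigma>)" "(sf ^^ t) \<pi> = ins q a ((sf ^^ t) \<sigma>)"
        using sfk_ins[OF plen, of a t] m pi by auto
      have hd: "hd ((sf ^^ t) \<pi>) = a" using st sl by simp
      have "ins q a ((sf ^^ t) \<sigma>) = a # (sf ^^ t) \<sigma>"
        using ins_hd[of a "(sf ^^ t) \<sigma>" q] q hd m aS' by auto
      hence "(sf ^^ t) \<sigma> = sorted_list_of_set S'" using q st sl by simp
      hence "\<sigma> \<in> Sort'" using sp by (simp add: Sort'_def)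
      moreover have "p \<in> Aset t a \<sigma>" using plen hd pi by (simp add: Aset_def)
      ultimately show "\<pi> \<in> F ` Sig" using pi unfolding Sig_def F_def by force
    qed
    show "F ` Sig \<subseteq> {\<pi> \<in> permutations_of_set S. (sf ^^ t) \<pi> = sorted_list_of_set S}"
    proof
      fix \<pi> assume "\<pi> \<in> F ` Sig"
      then obtain \<sigma> p where sS: "\<sigma> \<in> Sort'" and pA: "p \<in> Aset t a \<sigma>" and pi: "\<pi> = ins p a \<sigma>"
        unfolding Sig_def F_def by auto
      have sp: "\<sigma> \<in> permutations_of_set S'" and st': "(sf ^^ t) \<sigma> = sorted_list_of_set S'"
        using sS by (auto simp: Sort'_def)
      note m = memS'[OF sp]
      have plen: "p \<le> length \<sigma>" and hd: "hd ((sf ^^ t) \<pi>) = a" using pA pi by (auto simp: Aset_def)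
      have "\<pi> \<in> permutations_of_set S" using m aS' SS' pi by auto
      moreover
      obtain q where q: "q \<le> length ((sf ^^ t) \<sigma>)" "(sf ^^ t) \<pi> = ins q a ((sf ^^ t) \<sigma>)"
        using sfk_ins[OF plen, of a t] m pi by auto
      have "ins q a ((sf ^^ t) \<sigma>) = a # (sf ^^ t) \<sigma>"
        using ins_hd[of a "(sf ^^ t) \<sigma>" q] q hd m aS' by auto
      hence "(sf ^^ t) \<pi> = sorted_list_of_set S" using q st' sl by simp
      ultimately show "\<pi> \<in> {\<pi> \<in> permutations_of_set S. (sf ^^ t) \<pi> = sorted_list_of_set S}" by simp
    qed
  qed
  have inj: "inj_on F Sig"
  proof (rule inj_onI)
    fix u v assume u: "u \<in> Sig" and v: "v \<in> Sig" and e: "F u = F v"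
    obtain \<sigma> p where u': "u = (\<sigma>, p)" by (cases u)
    obtain \<tau> q where v': "v = (\<tau>, q)" by (cases v)
    have s1: "\<sigma> \<in> permutations_of_set S'" "p \<le> length \<sigma>" using u u' by (auto simp: Sig_def Sort'_def Aset_def)
    have s2: "\<tau> \<in> permutations_of_set S'" "q \<le> length \<tau>" using v v' by (auto simp: Sig_def Sort'_def Aset_def)
    have an1: "a \<notin> set \<sigma>" and an2: "a \<notin> set \<tau>" using memS'[OF s1(1)] memS'[OF s2(1)] aS' by auto
    have e': "ins p a \<sigma> = ins q a \<tau>" using e u' v' by (simp add: F_def)
    have "\<sigma> = \<tau>" using removeAll_ins[OF an1, of p] removeAll_ins[OF an2, of q] e' by simp
    moreover have "p = q"
      using takeWhile_ins[OF an1, of p] takeWhile_ins[OF an2, of q] e' s1(2) s2(2) \<open>\<sigma> = \<tau>\<close>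
      by (metis length_take min.absorb2)
    ultimately show "u = v" using u' v' by simp
  qed
  have fSort: "finite Sort'" by (simp add: Sort'_def)
  have cA: "\<And>\<sigma>. \<sigma> \<in> Sort' \<Longrightarrow> card (Aset t a \<sigma>) = min (Suc t) (Suc k)"
  proof -
    fix \<sigma> assume "\<sigma> \<in> Sort'"
    hence "\<sigma> \<in> permutations_of_set S'" by (simp add: Sort'_def)
    thus "card (Aset t a \<sigma>) = min (Suc t) (Suc k)" using memS' key by metis
  qed
  have finA: "\<And>\<sigma>. finite (Aset t a \<sigma>)" by (simp add: Aset_def)
  have "card Sig = (\<Sum>\<sigma>\<in>Sort'. card (Aset t a \<sigma>))"
    unfolding Sig_def using fSort finA by (simp add: card_SigmaI)
  also have "\<dots> = card Sort' * min (Suc t) (Suc k)" using cA by simp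
  finally have "card {\<pi> \<in> permutations_of_set S. (sf ^^ t) \<pi> = sorted_list_of_set S} = card Sort' * min (Suc t) (Suc k)"
    using img card_image[OF inj] by simp
  thus ?case using IH arith_step[of k t] Suc.hyps(2)[symmetric] by simp
qed

theorem theorem3p4:
  fixes n t :: nat
  assumes "n \<ge> 1"
  shows "card {\<pi> \<in> permutations_of_set {1..n}. t_stack_sortable t \<pi>} =
           (if n \<le> t then fact n else fact t * (t + 1) ^ (n - t))"
proof -
  have "{\<pi> \<in> permutations_of_set {1..n}. t_stack_sortable t \<pi>} =
        {\<pi> \<in> permutations_of_set {1..n}. (sf ^^ t) \<pi> = sorted_list_of_set {1..n}}"
  proof (rule Collect_cong, rule conj_cong[OF refl])
    fix \<pi> assume "\<pi> \<in> permutations_of_set {1..n}"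
    hence "length \<pi> = n" using length_finite_permutations_of_set by fastforce
    moreover have "sorted_list_of_set {1..n} = [1..<n+1]"
      by (metis atLeastLessThanSuc_atLeastAtMost sorted_list_of_set_range Suc_eq_plus1)
    ultimately show "t_stack_sortable t \<pi> = ((sf ^^ t) \<pi> = sorted_list_of_set {1..n})"
      by (simp add: t_stack_sortable_def s12_eq)
  qed
  thus ?thesis using count[of "{1..n}" t] by simp
qed


end
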